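(* Let $(G,\cdot)$ be a loop with identity $e$ and let $(H,\cdot)$ be a non-trivial subloop of $G$ such that $(xs\cdot z)s=x(sz\cdot s)$ for all $x,z\in G$ and $s\in H$. Then $R_{s^n}=R_s^n$ for all $s\in H$ and $n\in\mathbb{Z}$; that is, $xs^n=(\cdots((xs)s)\cdots)s$ ($n$ factors $s$) for all $x\in G$, $s\in H$.
   Context: Juxtaposition binds more tightly than $\cdot$. $R_s:G\to G$ is the right translation $xR_s=x\cdot s$. For $s\in H$ the left and right inverses coincide; call it $s^{-1}$. Powers: $s^0=e$, $s^n=s^{n-1}\cdot s$ for $n>0$, $s^n=(s^{-1})^{|n|}$ for $n<0$; $R_s^n$ is the $n$-th power of the permutation $R_s$ in the symmetric group of $G$. *)

theory Defs
  imports Main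
begin

definition loop :: "'a set \<Rightarrow> ('a \<Rightarrow> 'a \<Rightarrow> 'a) \<Rightarrow> 'a \<Rightarrow> bool" where
  "loop G m e \<longleftrightarrow>
     e \<in> G \<and>
     (\<forall>x\<in>G. \<forall>y\<in>G. m x y \<in> G) \<and>
     (\<forall>x\<in>G. m e x = x \<and> m x e = x) \<and>
     (\<forall>a\<in>G. \<forall>b\<in>G. \<exists>!x. x \<in> G \<and> m a x = b) \<and>
     (\<forall>a\<in>G. \<forall>b\<in>G. \<exists>!y. y \<in> G \<and> m y a = b)"

definition subloop :: "'a set \<Rightarrow> 'a set \<Rightarrow> ('a \<Rightarrow> 'a \<Rightarrow> 'a) \<Rightarrow> 'a \<Rightarrow> bool" where
  "subloop H G m e \<longleftrightarrow> H \<subseteq> G \<and> loop H m e"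

definition rtrans :: "('a \<Rightarrow> 'a \<Rightarrow> 'a) \<Rightarrow> 'a \<Rightarrow> 'a \<Rightarrow> 'a" where
  "rtrans m s = (\<lambda>x. m x s)"

definition linv :: "'a set \<Rightarrow> ('a \<Rightarrow> 'a \<Rightarrow> 'a) \<Rightarrow> 'a \<Rightarrow> 'a \<Rightarrow> 'a" where
  "linv G m e s = (THE x. x \<in> G \<and> m s x = e)"

primrec npow :: "('a \<Rightarrow> 'a \<Rightarrow> 'a) \<Rightarrow> 'a \<Rightarrow> 'a \<Rightarrow> nat \<Rightarrow> 'a" where
  "npow m e s 0 = e"
| "npow m e s (Suc n) = m (npow m e s n) s"

definition ipow :: "'a set \<Rightarrow> ('a \<Rightarrow> 'a \<Rightarrow> 'a) \<Rightarrow> 'a \<Rightarrow> 'a \<Rightarrow> int \<Rightarrow> 'a" where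
  "ipow G m e s n = (if 0 \<le> n then npow m e s (nat n) else npow m e (linv G m e s) (nat (- n)))"

definition Rpow :: "'a set \<Rightarrow> ('a \<Rightarrow> 'a \<Rightarrow> 'a) \<Rightarrow> 'a \<Rightarrow> int \<Rightarrow> 'a \<Rightarrow> 'a" where
  "Rpow G m s n = (if 0 \<le> n then rtrans m s ^^ nat n else inv_into G (rtrans m s) ^^ nat (- n))"

end

theory Submission
  imports Defs
begin

lemma npow_funpow: "npow m e s n = (rtrans m s ^^ n) e"
  by (induction n) (auto simp: rtrans_def)

lemma npow_in:
  assumes "loop G m e" "s \<in> G" shows "npow m e s n \<in> G"
  using assms by (induction n) (auto simp: loop_def)

lemma funpow_cong_on:
  assumes "\<And>x. x \<in> G \<Longrightarrow> f x = g x" "\<And>x. x \<in> G \<Longrightarrow> f x \<in> G" "x \<in> G"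
  shows "(f ^^ n) x = (g ^^ n) x \<and> (f ^^ n) x \<in> G"
  using assms by (induction n) auto

lemma pos_pow:
  assumes L: "loop G m e" and sG: "s \<in> G"
    and id: "\<forall>x\<in>G. \<forall>z\<in>G. m (m (m x s) z) s = m x (m (m s z) s)"
  shows "\<forall>x\<in>G. m x (npow m e s n) = (rtrans m s ^^ n) x"
proof (induction n rule: nat_less_induct)
  case (1 n)
  have cl: "\<And>x y. x\<in>G \<Longrightarrow> y\<in>G \<Longrightarrow> m x y \<in> G" and un: "\<And>x. x\<in>G \<Longrightarrow> m e x = x \<and> m x e = x"
    using L by (auto simp: loop_def)
  show ?case
  proof (cases n)
    case 0 then show ?thesis using un by simp
  next
    case (Suc k) note k = this
    show ?thesis
    proof (cases k)
      case 0 then show ?thesis using k un sG by (simp add: rtrans_def)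
    next
      case (Suc j)
      have IH: "\<forall>x\<in>G. m x (npow m e s j) = (rtrans m s ^^ j) x" using 1 k Suc by auto
      have pj: "npow m e s j \<in> G" using npow_in[OF L sG] .
      have "m s (npow m e s j) = (rtrans m s ^^ j) (rtrans m s e)" using IH sG un by (simp add: rtrans_def)
      also have "\<dots> = npow m e s (Suc j)" by (simp add: npow_funpow funpow_swap1)
      finally have sj: "m s (npow m e s j) = npow m e s (Suc j)" .
      show ?thesis
      proof
        fix x assume x: "x \<in> G"
        have "m x (npow m e s n) = m x (m (m s (npow m e s j)) s)" using k Suc sj by simp
        also have "\<dots> = m (m (m x s) (npow m e s j)) s" using id x pj by simp
        also have "\<dots> = rtrans m s ((rtrans m s ^^ j) (rtrans m s x))"
          using IH cl[OF x sG] by (simp add: rtrans_def)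
        also have "\<dots> = (rtrans m s ^^ n) x" using k Suc by (simp add: funpow_swap1)
        finally show "m x (npow m e s n) = (rtrans m s ^^ n) x" .
      qed
    qed
  qed
qed

theorem corollary3p1:
  fixes G H :: "'a set" and m :: "'a \<Rightarrow> 'a \<Rightarrow> 'a" and e :: 'a
  assumes "loop G m e"
    and "subloop H G m e"
    and "H \<noteq> {e}"
    and "\<forall>x\<in>G. \<forall>z\<in>G. \<forall>s\<in>H. m (m (m x s) z) s = m x (m (m s z) s)"
  shows "\<forall>s\<in>H. \<forall>n::int. \<forall>x\<in>G. rtrans m (ipow G m e s n) x = Rpow G m s n x"
proof (intro ballI allI)
  fix s n x assume sH: "s \<in> H" and x: "x \<in> G"
  have L: "loop G m e" by fact
  have LH: "loop H m e" and HG: "H \<subseteq> G" using assms(2) by (auto simp: subloop_def)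
  have sG: "s \<in> G" using sH HG by auto
  have cl: "\<And>x y. x\<in>G \<Longrightarrow> y\<in>G \<Longrightarrow> m x y \<in> G" and un: "\<And>x. x\<in>G \<Longrightarrow> m e x = x \<and> m x e = x"
    and eG: "e \<in> G"
    and ld: "\<And>a b. a\<in>G \<Longrightarrow> b\<in>G \<Longrightarrow> \<exists>!x. x \<in> G \<and> m a x = b"
    and rd: "\<And>a b. a\<in>G \<Longrightarrow> b\<in>G \<Longrightarrow> \<exists>!y. y \<in> G \<and> m y a = b"
    using L by (auto simp: loop_def)
  have eH: "e \<in> H" using LH by (auto simp: loop_def)
  have "\<forall>a\<in>H. \<forall>b\<in>H. \<exists>!x. x \<in> H \<and> m a x = b" using LH unfolding loop_def by (elim conjE)
  then have "\<exists>!x. x \<in> H \<and> m s x = e" using sH eH by blast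
  then obtain t where tH: "t \<in> H" and st: "m s t = e" by blast
  have tG: "t \<in> G" using tH HG by auto
  have lt: "linv G m e s = t"
    unfolding linv_def by (rule the1_equality[OF ld[OF sG eG]]) (simp add: tG st)
  have injR: "\<And>y1 y2. y1\<in>G \<Longrightarrow> y2\<in>G \<Longrightarrow> m y1 s = m y2 s \<Longrightarrow> y1 = y2"
  proof -
    fix y1 y2 assume a: "y1\<in>G" "y2\<in>G" "m y1 s = m y2 s"
    have "m y1 s \<in> G" using cl a sG by blast
    from rd[OF sG this] obtain u where "\<forall>y. y \<in> G \<and> m y s = m y1 s \<longrightarrow> y = u"
      by (elim ex1E) (rule that, blast)
    then show "y1 = y2" using a by metis
  qed
  have bk: "\<And>y. y \<in> G \<Longrightarrow> m (m y s) t = y"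
  proof -
    fix y assume y: "y \<in> G"
    have "m (m (m y s) t) s = m y (m (m s t) s)" using assms(4) y tG sH by simp
    also have "\<dots> = m y s" using st un sG by simp
    finally have "m (m (m y s) t) s = m y s" .
    moreover have "m (m y s) t \<in> G" using cl y sG tG by blast
    ultimately show "m (m y s) t = y" using injR y by blast
  qed
  have fwd: "\<And>y. y \<in> G \<Longrightarrow> m (m y t) s = y"
  proof -
    fix y assume y: "y \<in> G"
    obtain w where w: "w \<in> G" "m w s = y" using rd[OF sG y] by blast
    show "m (m y t) s = y" using bk[OF w(1)] w by simp
  qed
  have invR: "\<And>y. y \<in> G \<Longrightarrow> inv_into G (rtrans m s) y = rtrans m t y"
  proof -
    fix y assume y: "y \<in> G"
    have inj: "inj_on (rtrans m s) G" using injR by (auto simp: inj_on_def rtrans_def)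
    have "inv_into G (rtrans m s) (rtrans m s (m y t)) = m y t"
      by (rule inv_into_f_f[OF inj]) (use cl y tG in auto)
    then show "inv_into G (rtrans m s) y = rtrans m t y" using fwd y by (simp add: rtrans_def)
  qed
  show "rtrans m (ipow G m e s n) x = Rpow G m s n x"
  proof (cases "0 \<le> n")
    case True
    then show ?thesis using pos_pow[OF L sG] assms(4) sH x
      by (simp add: ipow_def Rpow_def rtrans_def)
  next
    case False
    have id_t: "\<forall>x\<in>G. \<forall>z\<in>G. m (m (m x t) z) t = m x (m (m t z) t)" using assms(4) tH by simp
    have "rtrans m (ipow G m e s n) x = (rtrans m t ^^ nat (-n)) x"
      using pos_pow[OF L tG id_t] x False lt by (simp add: ipow_def rtrans_def)
    also have "\<dots> = (inv_into G (rtrans m s) ^^ nat (-n)) x"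
      using funpow_cong_on[of G "rtrans m t" "inv_into G (rtrans m s)" x "nat (-n)"] invR x cl tG
      by (auto simp: rtrans_def)
    finally show ?thesis using False by (simp add: Rpow_def)
  qed
qed

end
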